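(* Let $q$ be a prime power, $n$ a positive integer, $L(x)=\sum_{i=0}^{n-1}a_ix^{q^{2i}}$ with $a_i\in\mathbb F_{q^{2n}}$, and suppose $\sigma_L$ is $\lambda$-Hermitian for some $\lambda\in\mathbb F_{q^2}$. Let $r=n-\dim\ker L$, and for $c\in\mathbb F_{q^2}$ let $N_c$ be the number of $u\in\mathbb F_{q^{2n}}$ with $\mathrm{Tr}(uL(u^q))+c=0$. Then \[N_c=\begin{cases}q^{2n-1}+(-1)^r(q-1)q^{2n-r-1}&\text{if }c=0,\\ q^{2n-1}+(-1)^{r-1}q^{2n-r-1}&\text{if }c^{q-1}=\lambda,\\ 0&\text{otherwise.}\end{cases}\]
   Context: $\mathrm{Tr}$ is the trace $\mathbb F_{q^{2n}}\to\mathbb F_{q^2}$ and $\sigma_L(u,v)=\mathrm{Tr}(uL(v^q))$. For a sesquilinear form $\sigma$, $\sigma^*(u,v)=\sigma(v,u)^q$, and $\sigma$ is $\lambda$-Hermitian if $\sigma^*=\lambda\sigma$. $\ker L$ is the kernel of the induced $\mathbb F_{q^2}$-linear map on $\mathbb F_{q^{2n}}$, dimension over $\mathbb F_{q^2}$. *)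

theory Defs
  imports "HOL-Computational_Algebra.Primes"
begin

text \<open>The field F_{q^{2n}} is modelled as a finite field type 'a with CARD('a) = q^(2n).
  Frobenius is x \<mapsto> x^q; the subfield F_{q^2} is {x. x^(q^2) = x}.\<close>

definition prime_power :: "nat \<Rightarrow> bool" where
  "prime_power q \<longleftrightarrow> (\<exists>p k. prime p \<and> k > 0 \<and> q = p ^ k)"

definition subfield_q2 :: "nat \<Rightarrow> 'a::field set" where
  "subfield_q2 q = {x. x ^ (q^2) = x}"

definition trace_rel :: "nat \<Rightarrow> nat \<Rightarrow> 'a::field \<Rightarrow> 'a" where
  "trace_rel q n x = (\<Sum>i<n. x ^ (q ^ (2*i)))"

definition linpoly :: "nat \<Rightarrow> nat \<Rightarrow> (nat \<Rightarrow> 'a::field) \<Rightarrow> 'a \<Rightarrow> 'a" where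
  "linpoly q n a x = (\<Sum>i<n. a i * x ^ (q ^ (2*i)))"

definition sigma_L :: "nat \<Rightarrow> nat \<Rightarrow> (nat \<Rightarrow> 'a::field) \<Rightarrow> 'a \<Rightarrow> 'a \<Rightarrow> 'a" where
  "sigma_L q n a u v = trace_rel q n (u * linpoly q n a (v ^ q))"

definition is_hermitian :: "nat \<Rightarrow> ('a::field \<Rightarrow> 'a \<Rightarrow> 'a) \<Rightarrow> 'a \<Rightarrow> bool" where
  "is_hermitian q \<sigma> lam \<longleftrightarrow> (\<forall>u v. (\<sigma> v u) ^ q = lam * \<sigma> u v)"

definition ker_L :: "nat \<Rightarrow> nat \<Rightarrow> (nat \<Rightarrow> 'a::field) \<Rightarrow> 'a set" where
  "ker_L q n a = {x. linpoly q n a x = 0}"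

definition dim_q2 :: "nat \<Rightarrow> 'a set \<Rightarrow> nat" where
  "dim_q2 q V = (THE d. card V = (q^2) ^ d)"

end

theory Submission
  imports Defs "HOL-Number_Theory.Residues" "HOL-Computational_Algebra.Polynomial"
begin

locale ffq =
  fixes q n :: nat and ty :: "'a::{field,finite} itself"
  assumes pp: "prime_power q" and npos: "n > 0"
    and cardU: "card (UNIV::'a set) = q ^ (2*n)"
begin

lemma q_ge2: "q \<ge> 2"
proof -
  obtain p k where p: "prime p" "k > 0" "q = p ^ k" using pp unfolding prime_power_def by blast
  have "p ^ 1 \<le> p ^ k" using p prime_gt_0_nat[of p] by (intro power_increasing) auto
  then show ?thesis using p prime_ge_2_nat[of p] by simp
qed

lemma char_q: "\<exists>k. q = CHAR('a) ^ k"
proof -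
  obtain p k where p: "prime p" "k > 0" "q = p ^ k" using pp unfolding prime_power_def by blast
  have fin: "finite (UNIV::'a set)" by simp
  have "CHAR('a) > 0" using finite_imp_CHAR_pos[OF fin] .
  then have pc: "prime CHAR('a)" using prime_CHAR_semidom by blast
  have "CHAR('a) dvd p ^ (k * (2*n))" using CHAR_dvd_CARD[where 'a='a] cardU p(3)
    by (simp add: power_mult)
  then have "CHAR('a) dvd p" using pc prime_dvd_power by blast
  then have "CHAR('a) = p" using pc p(1) primes_dvd_imp_eq by blast
  then show ?thesis using p(3) by blast
qed

lemma prime_char: "prime CHAR('a)"
  using finite_imp_CHAR_pos[of] prime_CHAR_semidom by (metis finite_UNIV)

lemma frob_add_pow: "((x::'a) + y) ^ (q ^ j) = x ^ (q ^ j) + y ^ (q ^ j)"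
proof -
  obtain k where k: "q = CHAR('a) ^ k" using char_q by blast
  show ?thesis
    by (rule freshmans_dream'[OF prime_char]) (simp add: k power_mult[symmetric])
qed

lemma frob_add: "((x::'a) + y) ^ q = x ^ q + y ^ q"
  using frob_add_pow[of x y 1] by simp

lemma frob_sum_pow: "(sum (f::'b \<Rightarrow> 'a) A) ^ (q ^ j) = sum (\<lambda>i. f i ^ (q ^ j)) A"
proof -
  obtain k where k: "q = CHAR('a) ^ k" using char_q by blast
  show ?thesis
    by (rule freshmans_dream_sum'[OF prime_char]) (simp add: k power_mult[symmetric])
qed

lemma frob_neg_pow: "(- (x::'a)) ^ (q ^ j) = - (x ^ (q ^ j))"
proof -
  have "(x + - x) ^ (q ^ j) = x ^ (q ^ j) + (- x) ^ (q ^ j)" by (rule frob_add_pow)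
  moreover have "(0::'a) ^ (q ^ j) = 0" using q_ge2 by (simp add: power_0_left)
  ultimately have "0 = x ^ (q ^ j) + (- x) ^ (q ^ j)" by simp
  then show ?thesis by (simp add: eq_neg_iff_add_eq_0 add.commute)
qed

lemma frob_neg: "(- (x::'a)) ^ q = - (x ^ q)"
  using frob_neg_pow[of x 1] by simp

lemma frob_diff_pow: "((x::'a) - y) ^ (q ^ j) = x ^ (q ^ j) - y ^ (q ^ j)"
  using frob_add_pow[of x "-y" j] frob_neg_pow[of y j] by simp

lemma power_card_same: "(x::'a) ^ card (UNIV :: 'a set) = x"
proof (cases "x = 0")
  case False
  have "x * (\<Prod>y\<in>UNIV-{0}. x * y) = x * x ^ (card (UNIV :: 'a set) - 1) * \<Prod>(UNIV-{0})"
    by (simp add: prod.distrib mult_ac)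
  also have "x * x ^ (card (UNIV :: 'a set) - 1) = x ^ Suc (card (UNIV :: 'a set) - 1)"
    by (subst power_Suc) auto
  also have "Suc (card (UNIV :: 'a set) - 1) = card (UNIV :: 'a set)"
    using finite_UNIV_card_ge_0[where ?'a = 'a] by simp
  also have "(\<Prod>y\<in>UNIV-{0}. x * y) = (\<Prod>y\<in>UNIV-{0}. y)"
    by (rule prod.reindex_bij_witness[of _ "\<lambda>y. y / x" "\<lambda>y. x * y"]) (use False in auto)
  finally show ?thesis
    by simp
qed (use finite_UNIV_card_ge_0[where ?'a = 'a] in auto)

lemma power_m_one: assumes "(x::'a) \<noteq> 0" shows "x ^ (card (UNIV::'a set) - 1) = 1"
proof -
  obtain m where m: "card (UNIV::'a set) = Suc m"
    using finite_UNIV_card_ge_0[where ?'a = 'a] by (metis Suc_pred finite_UNIV)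
  have "x * x ^ m = x * 1" using power_card_same[of x] unfolding m by simp
  then show ?thesis using assms m by simp
qed

lemma cardU_ge: "card (UNIV::'a set) \<ge> 4"
proof -
  have "q ^ 2 \<le> q ^ (2*n)" using q_ge2 npos by (intro power_increasing) auto
  moreover have "4 \<le> q ^ 2" using q_ge2 power_mono[of 2 q 2] by simp
  ultimately show ?thesis using cardU by simp
qed

lemma roots_card:
  assumes d: "d > 0" "d dvd (card (UNIV::'a set) - 1)"
  shows "card {x::'a. x ^ d = 1} = d"
proof -
  define m where "m = card (UNIV::'a set) - 1"
  obtain e where e: "m = d * e" using d(2) unfolding m_def by blast
  have mpos: "m > 0" using cardU_ge unfolding m_def by simp
  then have epos: "e > 0" using e by (cases e) auto
  define A where "A = {x::'a. x ^ d = 1}"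
  define P1 where "P1 = monom (1::'a) d - 1"
  have P1ev: "poly P1 x = x ^ d - 1" for x unfolding P1_def by (simp add: poly_monom)
  have "coeff P1 d = 1" unfolding P1_def using d by simp
  then have P1nz: "P1 \<noteq> 0" by auto
  have "degree P1 \<le> d" unfolding P1_def
    by (rule order.trans[OF degree_diff_le_max]) (simp add: degree_monom_le)
  moreover have "A = {x. poly P1 x = 0}" unfolding A_def P1ev by simp
  ultimately have A_le: "card A \<le> d" using card_poly_roots_bound[OF P1nz] by simp
  define P2 where "P2 = (\<Sum>j<e. monom (1::'a) (d*j))"
  have P2ev: "poly P2 x = (\<Sum>j<e. (x^d)^j)" for x
    unfolding P2_def poly_sum by (simp add: poly_monom power_mult)
  have "coeff P2 0 = (\<Sum>j<e. coeff (monom (1::'a) (d*j)) 0)" unfolding P2_def coeff_sum ..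
  also have "\<dots> = (\<Sum>j<e. if j = 0 then 1 else 0)"
    by (intro sum.cong) (use d in \<open>auto simp: coeff_monom\<close>)
  also have "\<dots> = 1" using epos by simp
  finally have "coeff P2 0 = 1" by simp
  then have P2nz: "P2 \<noteq> 0" by auto
  have "degree P2 \<le> d * (e - 1)" unfolding P2_def
  proof (rule degree_sum_le)
    fix j assume "j \<in> {..<e}"
    then have "d * j \<le> d * (e - 1)" by (intro mult_le_mono2) simp
    then show "degree (monom (1::'a) (d * j)) \<le> d * (e - 1)"
      using degree_monom_le order.trans by blast
  qed simp
  moreover have "d * (e - 1) = m - d" using e by (simp add: right_diff_distrib')
  ultimately have B_le: "card {x. poly P2 x = 0} \<le> m - d"
    using card_poly_roots_bound[OF P2nz] by simp
  have sub: "UNIV - {0} \<subseteq> A \<union> {x. poly P2 x = 0}"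
  proof
    fix x :: 'a assume "x \<in> UNIV - {0}"
    then have "x ^ m = 1" using power_m_one unfolding m_def by simp
    then have "(x^d)^e - 1 = 0" using e by (simp add: power_mult)
    then have "(x^d - 1) * (\<Sum>j<e. (x^d)^j) = 0" using power_diff_1_eq[of "x^d" e] by simp
    then show "x \<in> A \<union> {x. poly P2 x = 0}" unfolding A_def P2ev by auto
  qed
  have c0: "card (UNIV - {0::'a}) = m" unfolding m_def by simp
  have "m \<le> card (A \<union> {x. poly P2 x = 0})" using sub unfolding c0[symmetric]
    by (intro card_mono) auto
  also have "\<dots> \<le> card A + card {x. poly P2 x = 0}" by (rule card_Un_le)
  finally have "m \<le> card A + card {x. poly P2 x = 0}" .
  moreover have "d \<le> m" using e epos by simp
  ultimately have "d \<le> card A" using B_le by linarith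
  with A_le show ?thesis unfolding A_def by simp
qed

definition K :: "'a set" where "K = subfield_q2 q"
definition Fq :: "'a set" where "Fq = {x. x ^ q = x}"

lemma card_pow_fixed:
  assumes "j > 0" "j dvd 2*n"
  shows "card {x::'a. x ^ (q^j) = x} = q ^ j"
proof -
  obtain t where t: "2*n = j * t" using assms by blast
  have q1: "q^j \<ge> 1" "(q^j)^t \<ge> 1" using q_ge2 by simp_all
  have eq: "int (q^j)^t - 1 = (int (q^j) - 1) * (\<Sum>i<t. (int (q^j))^i)"
    by (rule power_diff_1_eq)
  have "(int (q^j) - 1) dvd (int (q^j)^t - 1)" unfolding eq by (rule dvd_triv_left)
  then have "int (q^j - 1) dvd int ((q^j)^t - 1)" using q1 by (simp add: of_nat_diff)
  then have "(q^j - 1) dvd ((q^j)^t - 1)" by (simp only: of_nat_dvd_iff)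
  then have dv: "(q^j - 1) dvd (card (UNIV::'a set) - 1)" using t cardU by (simp add: power_mult)
  have "q ^ 1 \<le> q ^ j" using q_ge2 assms(1) by (intro power_increasing) auto
  then have qj: "q ^ j \<ge> 2" using q_ge2 by simp
  obtain mm where mm: "q ^ j = Suc mm" using qj by (cases "q^j") auto
  have "{x::'a. x ^ (q^j) = x} = insert 0 {x. x ^ (q^j - 1) = 1}"
  proof (intro equalityI subsetI)
    fix x :: 'a assume "x \<in> {x::'a. x ^ (q^j) = x}"
    then have x: "x ^ (q^j) = x" by simp
    show "x \<in> insert 0 {x. x ^ (q^j - 1) = 1}"
    proof (cases "x = 0")
      case False
      have "x * x ^ (q^j - 1) = x * 1" using x unfolding mm by simp
      then show ?thesis using False by simp
    qed simp
  next
    fix x :: 'a assume "x \<in> insert 0 {x. x ^ (q^j - 1) = 1}"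
    then show "x \<in> {x::'a. x ^ (q^j) = x}" using qj unfolding mm by (auto simp: power_0_left)
  qed
  moreover have "0 \<notin> {x::'a. x ^ (q^j - 1) = 1}" using qj by (simp add: power_0_left)
  ultimately show ?thesis using roots_card[OF _ dv] qj by simp
qed

lemma card_K: "card K = q^2"
  using card_pow_fixed[of 2] unfolding K_def subfield_q2_def by simp

lemma card_Fq: "card Fq = q"
  using card_pow_fixed[of 1] unfolding Fq_def by simp

lemma card_pow_eq_le:
  assumes "k > 0"
  shows "card {x::'a. x ^ k = t} \<le> k"
proof -
  define P where "P = monom (1::'a) k - [:t:]"
  have Pev: "poly P x = x ^ k - t" for x unfolding P_def by (simp add: poly_monom)
  have "coeff P k = 1" unfolding P_def using assms by (cases k) auto
  then have Pnz: "P \<noteq> 0" by auto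
  have "degree P \<le> k" unfolding P_def
    by (rule order.trans[OF degree_diff_le_max]) (simp add: degree_monom_le)
  moreover have "{x::'a. x ^ k = t} = {x. poly P x = 0}" unfolding Pev by simp
  ultimately show ?thesis using card_poly_roots_bound[OF Pnz] by simp
qed

lemma K_pow: "x \<in> K \<Longrightarrow> x ^ (q^2) = x"
  unfolding K_def subfield_q2_def by simp

lemma K_powi: assumes "x \<in> K" shows "x ^ (q^(2*i)) = x"
proof (induction i)
  case (Suc i)
  have "x ^ (q^(2*Suc i)) = (x ^ (q^(2*i))) ^ (q^2)"
    by (simp add: power_mult[symmetric] power_add[symmetric] mult.commute)
  then show ?case using Suc K_pow[OF assms] by simp
qed simp

lemma K_0 [simp]: "0 \<in> K" and K_1 [simp]: "1 \<in> K"
  unfolding K_def subfield_q2_def using q_ge2 by (auto simp: power_0_left)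

lemma K_add: "x \<in> K \<Longrightarrow> y \<in> K \<Longrightarrow> x + y \<in> K"
  unfolding K_def subfield_q2_def using frob_add_pow[of x y 2] by simp

lemma K_neg: "x \<in> K \<Longrightarrow> - x \<in> K"
  unfolding K_def subfield_q2_def using frob_neg_pow[of x 2] by simp

lemma K_diff: "x \<in> K \<Longrightarrow> y \<in> K \<Longrightarrow> x - y \<in> K"
  using K_add[of x "-y"] K_neg[of y] by simp

lemma K_mult: "x \<in> K \<Longrightarrow> y \<in> K \<Longrightarrow> x * y \<in> K"
  unfolding K_def subfield_q2_def by (simp add: power_mult_distrib)

lemma K_inv: "x \<in> K \<Longrightarrow> inverse x \<in> K"
  unfolding K_def subfield_q2_def by (simp add: power_inverse)

lemma K_div: "x \<in> K \<Longrightarrow> y \<in> K \<Longrightarrow> x / y \<in> K"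
  using K_mult[of x "inverse y"] K_inv[of y] by (simp add: divide_inverse)

lemma K_frob: "x \<in> K \<Longrightarrow> x ^ q \<in> K"
  unfolding K_def subfield_q2_def
  by (simp add: power_mult[symmetric] mult.commute power2_eq_square)
     (simp add: power_mult)

lemma K_frob2: "x \<in> K \<Longrightarrow> (x ^ q) ^ q = x"
  using K_pow[of x] by (simp add: power_mult[symmetric] power2_eq_square)

lemma K_norm: "x \<in> K \<Longrightarrow> (x ^ (q+1)) ^ q = x ^ (q+1)"
  using K_frob2[of x] by (simp add: power_add power_mult_distrib)

lemma Fq_K: "x \<in> Fq \<Longrightarrow> x \<in> K"
  unfolding K_def subfield_q2_def Fq_def by (simp add: power2_eq_square power_mult)

lemma norm_in_K:
  assumes s: "s ^ q = s" "s \<noteq> 0" and x: "x ^ (q+1) = s"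
  shows "x \<in> K"
proof -
  obtain qq where qq: "q = Suc qq" using q_ge2 by (cases q) auto
  have "s * s ^ qq = s * 1" using s(1) unfolding qq by simp
  then have "s ^ qq = 1" using mult_left_cancel[of s "s ^ qq" 1] s(2) by blast
  then have "s ^ (q - 1) = 1" unfolding qq by simp
  then have "x ^ ((q+1)*(q-1)) = 1" using x by (simp only: power_mult)
  moreover have qe: "q^2 = (q+1)*(q-1) + 1" unfolding qq
    by (simp add: power2_eq_square algebra_simps)
  ultimately have "x ^ (q^2) = x" unfolding qe power_add by simp
  then show ?thesis unfolding K_def subfield_q2_def by simp
qed

lemma norm_fiber:
  assumes t: "t ^ q = t" "t \<noteq> (0::'a)"
  shows "card {x::'a. x ^ (q+1) = t} = q + 1"
proof -
  define F where "F s = {x::'a. x ^ (q+1) = s}" for s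
  define T where "T = Fq - {0::'a}"
  have finT: "finite T" by simp
  have cT: "card T = q - 1" unfolding T_def using card_Fq
    by (simp add: Fq_def power_0_left q_ge2 card_Diff_singleton_if)
  have le: "card (F s) \<le> q + 1" for s unfolding F_def by (rule card_pow_eq_le) simp
  have Kset: "K - {0} = (\<Union>s\<in>T. F s)"
  proof (intro equalityI subsetI)
    fix x assume x: "x \<in> K - {0}"
    have "x ^ (q+1) \<in> T" using K_norm[of x] x unfolding T_def Fq_def by simp
    then show "x \<in> (\<Union>s\<in>T. F s)" unfolding F_def by blast
  next
    fix x assume "x \<in> (\<Union>s\<in>T. F s)"
    then obtain s where s: "s \<in> T" "x ^ (q+1) = s" unfolding F_def by blast
    then have "x \<noteq> 0" unfolding T_def by (auto simp: power_0_left)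
    obtain qq where qq: "q = Suc qq" using q_ge2 by (cases q) auto
    have "s ^ q = s" using s(1) unfolding T_def Fq_def by simp
    then have "s * s ^ qq = s * 1" unfolding qq by simp
    moreover have "s \<noteq> 0" using s(1) unfolding T_def by simp
    ultimately have "s ^ qq = 1" using mult_left_cancel[of s "s ^ qq" 1] by blast
    then have "s ^ (q - 1) = 1" unfolding qq by simp
    then have "x ^ ((q+1)*(q-1)) = 1" using s(2) by (simp only: power_mult)
    moreover have qe: "q^2 = (q+1)*(q-1) + 1" unfolding qq
      by (simp add: power2_eq_square algebra_simps)
    ultimately have "x ^ (q^2) = x" unfolding qe power_add by simp
    with \<open>x \<noteq> 0\<close> show "x \<in> K - {0}" unfolding K_def subfield_q2_def by simp
  qed
  have disj: "\<forall>s\<in>T. \<forall>s'\<in>T. s \<noteq> s' \<longrightarrow> F s \<inter> F s' = {}" unfolding F_def by auto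
  have "card (K - {0}) = q^2 - 1" using card_K by simp
  also have "card (K - {0}) = (\<Sum>s\<in>T. card (F s))"
    unfolding Kset by (rule card_UN_disjoint) (auto simp: disj)
  finally have sumF: "(\<Sum>s\<in>T. card (F s)) = q^2 - 1" .
  have "(\<Sum>s\<in>T. (q + 1) - card (F s)) = (\<Sum>s\<in>T. q + 1) - (\<Sum>s\<in>T. card (F s))"
    by (rule sum_subtractf_nat) (use le in auto)
  also have "\<dots> = (q - 1) * (q + 1) - (q^2 - 1)" using sumF cT by simp
  also have "\<dots> = 0" by (simp add: power2_eq_square algebra_simps)
  finally have "\<forall>s\<in>T. (q + 1) - card (F s) = 0" using finT by simp
  moreover have "t \<in> T" using t unfolding T_def Fq_def by simp
  ultimately show ?thesis using le[of t] unfolding F_def by fastforce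
qed

definition subsp :: "'a set \<Rightarrow> bool" where
  "subsp W \<longleftrightarrow> 0 \<in> W \<and> (\<forall>u\<in>W. \<forall>v\<in>W. u + v \<in> W) \<and> (\<forall>a\<in>K. \<forall>u\<in>W. a * u \<in> W)"

lemma subspD: assumes "subsp W"
  shows "0 \<in> W" "u \<in> W \<Longrightarrow> v \<in> W \<Longrightarrow> u + v \<in> W" "a \<in> K \<Longrightarrow> u \<in> W \<Longrightarrow> a * u \<in> W"
  using assms unfolding subsp_def by auto

lemma subsp_neg: "subsp W \<Longrightarrow> u \<in> W \<Longrightarrow> - u \<in> W"
  using subspD(3)[of W "-1" u] K_neg[of 1] by simp

lemma subsp_diff: "subsp W \<Longrightarrow> u \<in> W \<Longrightarrow> v \<in> W \<Longrightarrow> u - v \<in> W"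
  using subspD(2)[of W u "-v"] subsp_neg[of W v] by simp

lemma ext_inj:
  assumes T: "subsp T" and s: "s \<notin> T"
  shows "inj_on (\<lambda>(a, t). a * s + t) (K \<times> T)"
proof (rule inj_onI, clarify)
  fix a t b t' assume ab: "a \<in> K" "t \<in> T" "b \<in> K" "t' \<in> T" "a * s + t = b * s + t'"
  show "a = b \<and> t = t'"
  proof (cases "a = b")
    case False
    have "(a - b) * s = t' - t" using ab(5) by (simp add: algebra_simps)
    then have "s = inverse (a - b) * (t' - t)" using False by (simp add: field_simps)
    moreover have "inverse (a - b) \<in> K" using ab K_inv K_diff by blast
    moreover have "t' - t \<in> T" using ab subsp_diff[OF T] by blast
    ultimately have "s \<in> T" using subspD(3)[OF T] by simp
    with s show ?thesis by simp
  qed (use ab in simp)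
qed

lemma subsp_card_rel:
  assumes "subsp S" "subsp T" "T \<subseteq> S"
  shows "\<exists>d. card S = card T * (q^2)^d"
  using assms
proof (induction "card S - card T" arbitrary: T rule: less_induct)
  case less
  show ?case
  proof (cases "T = S")
    case True then show ?thesis by (intro exI[of _ 0]) simp
  next
    case False
    then obtain s where s: "s \<in> S" "s \<notin> T" using less.prems by blast
    define T' where "T' = (\<lambda>(a, t). a * s + t) ` (K \<times> T)"
    have cT': "card T' = q^2 * card T"
      unfolding T'_def using card_image[OF ext_inj[OF less.prems(2) s(2)]] card_K
      by (simp add: card_cartesian_product)
    have subT': "subsp T'" unfolding subsp_def
    proof (intro conjI ballI)
      show "0 \<in> T'" unfolding T'_def using subspD(1)[OF less.prems(2)]
        by (intro image_eqI[of _ _ "(0,0)"]) auto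
    next
      fix u v assume "u \<in> T'" "v \<in> T'"
      then obtain a t b t' where "a \<in> K" "t \<in> T" "b \<in> K" "t' \<in> T" "u = a * s + t" "v = b * s + t'"
        unfolding T'_def by auto
      then show "u + v \<in> T'" unfolding T'_def
        by (intro image_eqI[of _ _ "(a + b, t + t')"])
          (auto simp: algebra_simps K_add subspD(2)[OF less.prems(2)])
    next
      fix c u assume "c \<in> K" "u \<in> T'"
      then obtain a t where "a \<in> K" "t \<in> T" "u = a * s + t"
        unfolding T'_def by auto
      then show "c * u \<in> T'" unfolding T'_def using \<open>c \<in> K\<close>
        by (intro image_eqI[of _ _ "(c * a, c * t)"])
          (auto simp: algebra_simps K_mult subspD(3)[OF less.prems(2)])
    qed
    have T'S: "T' \<subseteq> S" unfolding T'_def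
      using subspD[OF less.prems(1)] s(1) less.prems(3) by auto
    have TT': "T \<subseteq> T'" unfolding T'_def
    proof
      fix t assume "t \<in> T" then show "t \<in> (\<lambda>(a, t). a * s + t) ` (K \<times> T)"
        by (intro image_eqI[of _ _ "(0, t)"]) auto
    qed
    have "T \<noteq> {}" using subspD(1)[OF less.prems(2)] by blast
    then have "card T > 0" by (simp add: card_gt_0_iff)
    then have "card T \<ge> 1" by simp
    moreover have "1 < q^2" using q_ge2 by (intro one_less_power) auto
    ultimately have "1 * card T < q^2 * card T" by (intro mult_strict_right_mono) auto
    then have "card T < card T'" using cT' by simp
    moreover have "card T' \<le> card S" using T'S by (simp add: card_mono)
    ultimately have "card S - card T' < card S - card T" by simp
    from less.hyps[OF this less.prems(1) subT' T'S] obtain d where "card S = card T' * (q^2)^d" by blast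
    then show ?thesis using cT' by (intro exI[of _ "Suc d"]) simp
  qed
qed

lemma subsp_card: assumes "subsp S" shows "\<exists>d. card S = (q^2)^d"
proof -
  have "subsp {0}" unfolding subsp_def by simp
  from subsp_card_rel[OF assms this] subspD(1)[OF assms] show ?thesis by simp
qed


lemma tr_add: "trace_rel q n ((x::'a) + y) = trace_rel q n x + trace_rel q n y"
  unfolding trace_rel_def by (simp add: frob_add_pow sum.distrib)

lemma tr_scal: "b \<in> K \<Longrightarrow> trace_rel q n (b * (x::'a)) = b * trace_rel q n x"
  unfolding trace_rel_def by (simp add: power_mult_distrib K_powi sum_distrib_left)

lemma tr_K: "trace_rel q n (x::'a) \<in> K"
proof -
  define f where "f i = x ^ (q ^ (2*i))" for i
  have fn: "f n = f 0" unfolding f_def using power_card_same[of x] cardU by simp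
  have "(trace_rel q n x) ^ (q^2) = (\<Sum>i<n. (x ^ (q ^ (2*i))) ^ (q^2))"
    unfolding trace_rel_def using frob_sum_pow[of "\<lambda>i. x ^ (q ^ (2*i))" "{..<n}" 2] by simp
  also have "\<dots> = (\<Sum>i<n. f (Suc i))"
    by (intro sum.cong) (simp_all add: f_def power_mult[symmetric] power_add[symmetric] mult.commute)
  also have "\<dots> = (\<Sum>i<n. f i)"
  proof -
    have "f 0 + (\<Sum>i<n. f (Suc i)) = (\<Sum>i<Suc n. f i)" by (rule sum.lessThan_Suc_shift[symmetric])
    also have "\<dots> = (\<Sum>i<n. f i) + f n" by simp
    finally show ?thesis using fn by simp
  qed
  finally show ?thesis unfolding K_def subfield_q2_def trace_rel_def f_def by simp
qed

lemma lin_add: "linpoly q n c ((x::'a) + y) = linpoly q n c x + linpoly q n c y"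
  unfolding linpoly_def by (simp add: frob_add_pow sum.distrib distrib_left)

lemma lin_scal: assumes "b \<in> K" shows "linpoly q n c (b * (x::'a)) = b * linpoly q n c x"
  unfolding linpoly_def sum_distrib_left
  by (intro sum.cong) (simp_all add: power_mult_distrib K_powi[OF assms] mult.left_commute)

lemma tr_nondeg:
  assumes y: "(y::'a) \<noteq> 0"
  shows "\<exists>u. trace_rel q n (u * y) \<noteq> 0"
proof (rule ccontr)
  assume "\<not> ?thesis"
  then have all: "\<forall>u. trace_rel q n (u * y) = 0" by simp
  define P where "P = (\<Sum>i<n. monom (y ^ (q ^ (2*i))) (q ^ (2*i)))"
  have Pev: "poly P u = trace_rel q n (u * y)" for u
    unfolding P_def trace_rel_def poly_sum by (simp add: poly_monom power_mult_distrib mult_ac)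
  have gt1: "q ^ (2*i) \<noteq> 1" if "i > 0" for i
  proof -
    have "1 < q ^ (2*i)" using q_ge2 that by (intro one_less_power) auto
    then show ?thesis by (intro notI) linarith
  qed
  have "coeff P 1 = (\<Sum>i<n. if i = 0 then y else 0)"
    unfolding P_def coeff_sum
    by (intro sum.cong) (auto simp: coeff_monom gt1 dest: gt1)
  also have "\<dots> = y" using npos by simp
  finally have "P \<noteq> 0" using y by auto
  moreover have "degree P \<le> q ^ (2*(n-1))" unfolding P_def
  proof (rule degree_sum_le)
    fix i assume "i \<in> {..<n}"
    then have "q ^ (2*i) \<le> q ^ (2*(n-1))" using q_ge2 by (intro power_increasing) auto
    then show "degree (monom (y ^ (q ^ (2*i))) (q ^ (2*i))) \<le> q ^ (2*(n-1))"
      using degree_monom_le order.trans by blast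
  qed simp
  ultimately have "card {u. poly P u = 0} \<le> q ^ (2*(n-1))"
    using card_poly_roots_bound order.trans by blast
  moreover have "{u. poly P u = 0} = UNIV" using all Pev by simp
  moreover have "q ^ (2*(n-1)) < q ^ (2*n)" using q_ge2 npos by (intro power_strict_increasing) auto
  ultimately show False using cardU by simp
qed

lemma frob_inj: "inj (\<lambda>x::'a. x ^ q)"
proof (rule injI)
  fix x y :: 'a assume "x ^ q = y ^ q"
  then have "(x - y) ^ q = 0" using frob_diff_pow[of x y 1] by simp
  then show "x = y" by simp
qed

end

locale herm = ffq q n ty for q n :: nat and ty :: "'a::{field,finite} itself" +
  fixes \<sigma> :: "'a \<Rightarrow> 'a \<Rightarrow> 'a" and lam :: 'a
  assumes addL: "\<sigma> (u + u') v = \<sigma> u v + \<sigma> u' v"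
    and addR: "\<sigma> u (v + v') = \<sigma> u v + \<sigma> u v'"
    and scL: "a \<in> K \<Longrightarrow> \<sigma> (a * u) v = a * \<sigma> u v"
    and scR: "a \<in> K \<Longrightarrow> \<sigma> u (a * v) = a ^ q * \<sigma> u v"
    and hermit: "(\<sigma> v u) ^ q = lam * \<sigma> u v"
    and valK: "\<sigma> u v \<in> K"
begin

lemma sig0L [simp]: "\<sigma> 0 v = 0" using addL[of 0 0 v] by (metis add_0 add_cancel_right_right)
lemma sig0R [simp]: "\<sigma> u 0 = 0" using addR[of u 0 0] by (metis add_0 add_cancel_right_right)

lemma perp_sym: "\<sigma> v u = 0 \<Longrightarrow> \<sigma> u v = 0"
  using hermit[of u v] q_ge2 by (simp add: power_0_left)

lemma Q_frob: "(\<sigma> u u) ^ q = lam * \<sigma> u u" using hermit .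

definition rad :: "'a set \<Rightarrow> 'a set" where "rad W = {v \<in> W. \<forall>u\<in>W. \<sigma> u v = 0}"
definition NC :: "'a set \<Rightarrow> 'a \<Rightarrow> nat" where "NC W c = card {u \<in> W. \<sigma> u u + c = 0}"

definition formula :: "nat \<Rightarrow> int \<Rightarrow> int \<Rightarrow> 'a \<Rightarrow> int" where
  "formula r w R c = (if c = 0 then w + (-1)^r * (int q - 1) * int q ^ r * R
     else if c ^ q = lam * c then w - (-1)^r * int q ^ r * R else 0)"

lemma polarize:
  assumes W: "subsp W" and uv: "u \<in> W" "v \<in> W" "\<sigma> u v \<noteq> 0"
  shows "\<exists>u0\<in>W. \<sigma> u0 u0 \<noteq> 0"
proof (rule ccontr)
  assume "\<not> ?thesis"
  then have Z: "\<And>x. x \<in> W \<Longrightarrow> \<sigma> x x = 0" by blast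
  define t where "t = \<sigma> u v"
  define s where "s = \<sigma> v u"
  have key: "a ^ q * t + a * s = 0" if a: "a \<in> K" for a
  proof -
    have "a * v \<in> W" using subspD(3)[OF W a uv(2)] .
    then have "u + a * v \<in> W" using subspD(2)[OF W uv(1)] by simp
    then have "0 = \<sigma> (u + a * v) (u + a * v)" using Z by simp
    also have "\<dots> = \<sigma> u u + \<sigma> u (a * v) + (\<sigma> (a * v) u + \<sigma> (a * v) (a * v))"
      by (simp add: addL addR algebra_simps)
    also have "\<dots> = a ^ q * t + a * s"
      using Z[OF uv(1)] Z[OF uv(2)] a by (simp add: scL scR t_def s_def)
    finally show ?thesis by simp
  qed
  from key[of 1] have st: "s = - t" by (simp add: eq_neg_iff_add_eq_0 add.commute)
  have "K \<subseteq> Fq"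
  proof
    fix a assume a: "a \<in> K"
    from key[OF a] st have "(a ^ q - a) * t = 0" by (simp add: algebra_simps)
    then show "a \<in> Fq" using uv(3) unfolding Fq_def t_def by simp
  qed
  then have "card K \<le> card Fq" by (simp add: card_mono)
  then have "q^2 \<le> q" using card_K card_Fq by simp
  then show False using q_ge2 by (simp add: power2_eq_square)
qed


lemma ar1: fixes x w R e y :: int
  shows "(w + e*(x-1)*y*R) + (x^2-1)*(w - e*y*R) = x^2*w + (-e)*(x-1)*(x*y)*R"
  by (simp add: algebra_simps power2_eq_square)

lemma ar2: fixes x w R e y :: int
  shows "(x+1)*(w + e*(x-1)*y*R) + (x^2-x-1)*(w - e*y*R) = x^2*w - (-e)*(x*y)*R"
  by (simp add: algebra_simps power2_eq_square)

lemma Q_decomp: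
  assumes "b \<in> K" "\<sigma> w u0 = 0"
  shows "\<sigma> (b * u0 + w) (b * u0 + w) = b ^ (q+1) * \<sigma> u0 u0 + \<sigma> w w"
proof -
  have "\<sigma> u0 w = 0" using perp_sym assms(2) by blast
  then show ?thesis using assms
    by (simp add: addL addR scL scR algebra_simps power_add)
qed

lemma count_ind:
  "subsp W \<Longrightarrow> card W = q^(2*r) * card (rad W) \<Longrightarrow>
   int q * int (NC W c) = formula r (int (card W)) (int (card (rad W))) c"
proof (induction r arbitrary: W c)
  case 0
  have "rad W \<subseteq> W" by (auto simp: rad_def)
  then have RW: "rad W = W" using 0 card_subset_eq[of W "rad W"] by simp
  have Z: "\<sigma> u u = 0" if "u \<in> W" for u
    using that RW unfolding rad_def by blast
  have S: "{u \<in> W. \<sigma> u u + c = 0} = (if c = 0 then W else {})" using Z by auto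
  show ?case unfolding NC_def formula_def S RW by (simp add: algebra_simps)
next
  case (Suc r)
  note W = Suc.prems(1)
  define R where "R = rad W"
  have RsubW: "R \<subseteq> W" by (auto simp: R_def rad_def)
  have "0 \<in> R" using subspD(1)[OF W] by (simp add: R_def rad_def)
  then have cR: "card R > 0" by (auto simp: card_gt_0_iff)
  have "1 < q ^ (2 * Suc r)" using q_ge2 by (intro one_less_power) auto
  then have "1 * card R < q ^ (2 * Suc r) * card R" using cR by (intro mult_strict_right_mono) auto
  then have "card R < card W" using Suc.prems(2) by (simp add: R_def)
  then have "R \<noteq> W" by auto
  then obtain v where v: "v \<in> W" "v \<notin> R" using RsubW by blast
  then obtain u where u: "u \<in> W" "\<sigma> u v \<noteq> 0" unfolding R_def rad_def by blast
  obtain u0 where u0: "u0 \<in> W" "\<sigma> u0 u0 \<noteq> 0" using polarize[OF W u(1) v(1) u(2)] by blast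
  define a where "a = \<sigma> u0 u0"
  have a0: "a \<noteq> 0" using u0 by (simp add: a_def)
  have aq: "a ^ q = lam * a" unfolding a_def by (rule Q_frob)
  have lam0: "lam \<noteq> 0" using aq a0 by auto
  have aK: "a \<in> K" unfolding a_def by (rule valK)
  define W' where "W' = {w \<in> W. \<sigma> w u0 = 0}"
  have W'sub: "W' \<subseteq> W" by (auto simp: W'_def)
  have subW': "subsp W'" unfolding subsp_def W'_def
    using subspD[OF W] by (auto simp: addL scL)
  define \<phi> where "\<phi> = (\<lambda>(b, w). b * u0 + w)"
  have \<phi>u0: "\<sigma> (\<phi> (b, w)) u0 = b * a" if "b \<in> K" "w \<in> W'" for b w
    using that by (simp add: \<phi>_def addL scL W'_def a_def)
  have inj: "inj_on \<phi> (K \<times> W')"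
  proof (rule inj_onI, clarify)
    fix b w b' w' assume h: "b \<in> K" "w \<in> W'" "b' \<in> K" "w' \<in> W'" "\<phi> (b, w) = \<phi> (b', w')"
    then have "b * a = b' * a" using \<phi>u0 by metis
    then have "b = b'" using a0 by simp
    then show "b = b' \<and> w = w'" using h(5) by (simp add: \<phi>_def)
  qed
  have img: "\<phi> ` (K \<times> W') = W"
  proof (intro equalityI subsetI)
    fix x assume "x \<in> \<phi> ` (K \<times> W')"
    then obtain b w where "b \<in> K" "w \<in> W'" "x = \<phi> (b, w)" by auto
    then show "x \<in> W" using subspD[OF W] u0(1) W'sub by (auto simp: \<phi>_def)
  next
    fix x assume x: "x \<in> W"
    define b where "b = \<sigma> x u0 / a"
    have bK: "b \<in> K" unfolding b_def using K_div valK aK by blast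
    define w where "w = x + (- b) * u0"
    have "w \<in> W" unfolding w_def using subspD[OF W] x u0(1) bK K_neg by blast
    moreover have "\<sigma> w u0 = 0"
    proof -
      have "\<sigma> w u0 = \<sigma> x u0 + (- b) * a" unfolding w_def a_def
        using scL[OF K_neg[OF bK]] by (simp only: addL)
      then show ?thesis using a0 by (simp add: b_def)
    qed
    ultimately have "w \<in> W'" by (simp add: W'_def)
    moreover have "x = \<phi> (b, w)" by (simp add: \<phi>_def w_def)
    ultimately show "x \<in> \<phi> ` (K \<times> W')" using bK by blast
  qed
  have cW: "card W = q^2 * card W'"
    using card_image[OF inj] img card_K by (simp add: card_cartesian_product)
  have radW': "rad W' = R"
  proof (intro equalityI subsetI)
    fix x assume x: "x \<in> rad W'"
    then have xW': "x \<in> W'" and xp: "\<forall>y\<in>W'. \<sigma> y x = 0" by (auto simp: rad_def)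
    have "\<sigma> y x = 0" if y: "y \<in> W" for y
    proof -
      obtain b w where bw: "b \<in> K" "w \<in> W'" "y = \<phi> (b, w)" using y img by blast
      have "\<sigma> u0 x = 0" using xW' perp_sym by (auto simp: W'_def)
      then show ?thesis using bw xp by (simp add: \<phi>_def addL scL)
    qed
    then show "x \<in> R" using xW' W'sub by (auto simp: R_def rad_def)
  next
    fix x assume x: "x \<in> R"
    then have "x \<in> W" "\<sigma> u0 x = 0" using u0(1) by (auto simp: R_def rad_def)
    then have "x \<in> W'" using perp_sym by (auto simp: W'_def)
    then show "x \<in> rad W'" using x W'sub by (auto simp: R_def rad_def)
  qed
  have "q^2 * card W' = q^2 * (q^(2*r) * card R)"
  proof -
    have "q^(2*Suc r) = q^2 * q^(2*r)" by (simp add: power_add[symmetric])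
    then have e1: "card W = q^2 * (q^(2*r) * card R)" using Suc.prems(2) unfolding R_def
      by (simp only: mult.assoc)
    show ?thesis using e1 unfolding cW .
  qed
  then have cW': "card W' = q^(2*r) * card (rad W')" using q_ge2 radW' by simp
  have IH: "int q * int (NC W' d) = formula r (int (card W')) (int (card R)) d" for d
    using Suc.IH[OF subW' cW'] radW' by simp
  have cnt: "NC W c = (\<Sum>b\<in>K. NC W' (c + b ^ (q+1) * a))"
  proof -
    have "{u \<in> W. \<sigma> u u + c = 0} = \<phi> ` (SIGMA b:K. {w \<in> W'. \<sigma> w w + (c + b ^ (q+1) * a) = 0})"
    proof (intro equalityI subsetI)
      fix x assume "x \<in> {u \<in> W. \<sigma> u u + c = 0}"
      then have x: "x \<in> W" "\<sigma> x x + c = 0" by auto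
      obtain b w where bw: "b \<in> K" "w \<in> W'" "x = \<phi> (b, w)" using x(1) img by blast
      have "\<sigma> x x = b ^ (q+1) * a + \<sigma> w w"
        using bw Q_decomp[of b w u0] by (simp add: \<phi>_def W'_def a_def)
      then have "\<sigma> w w + (c + b ^ (q+1) * a) = 0" using x(2) by (simp add: algebra_simps)
      then show "x \<in> \<phi> ` (SIGMA b:K. {w \<in> W'. \<sigma> w w + (c + b ^ (q+1) * a) = 0})"
        using bw by blast
    next
      fix x assume "x \<in> \<phi> ` (SIGMA b:K. {w \<in> W'. \<sigma> w w + (c + b ^ (q+1) * a) = 0})"
      then obtain b w where bw: "b \<in> K" "w \<in> W'" "x = \<phi> (b, w)"
        and e: "\<sigma> w w + (c + b ^ (q+1) * a) = 0" by blast
      have "\<sigma> x x = b ^ (q+1) * a + \<sigma> w w"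
        using bw Q_decomp[of b w u0] by (simp add: \<phi>_def W'_def a_def)
      moreover have "x \<in> W" using bw img by blast
      ultimately show "x \<in> {u \<in> W. \<sigma> u u + c = 0}" using e by (simp add: algebra_simps)
    qed
    moreover have "inj_on \<phi> (SIGMA b:K. {w \<in> W'. \<sigma> w w + (c + b ^ (q+1) * a) = 0})"
      by (rule inj_on_subset[OF inj]) auto
    ultimately have "NC W c = card (SIGMA b:K. {w \<in> W'. \<sigma> w w + (c + b ^ (q+1) * a) = 0})"
      unfolding NC_def by (simp add: card_image)
    also have "\<dots> = (\<Sum>b\<in>K. NC W' (c + b ^ (q+1) * a))"
      by (simp add: NC_def)
    finally show ?thesis .
  qed
  define fA where "fA = int (card W') + (-1)^r * (int q - 1) * int q ^ r * int (card R)"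
  have fA': "formula r (int (card W')) (int (card R)) 0 = fA" by (simp add: formula_def fA_def)
  have cWi: "int (card W) = int q ^ 2 * int (card W')" using cW by simp
  define fB where "fB = int (card W') - (-1)^r * int q ^ r * int (card R)"
  have main: "int q * int (NC W c) = (\<Sum>b\<in>K. formula r (int (card W')) (int (card R)) (c + b ^ (q+1) * a))"
    unfolding cnt by (simp add: sum_distrib_left IH)
  have dq: "(b ^ (q+1) * a) ^ q = lam * (b ^ (q+1) * a)" if "b \<in> K" for b
  proof -
    have "(b ^ (q+1) * a) ^ q = (b ^ (q+1)) ^ q * a ^ q" by (rule power_mult_distrib)
    also have "\<dots> = b ^ (q+1) * (lam * a)" using K_norm[OF that] aq by simp
    finally show ?thesis by (simp add: mult_ac)
  qed
  have ncK: "card (K - {0}) = q^2 - 1" using card_K by simp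
  have q2: "q^2 \<ge> 1" using q_ge2 by simp
  show ?case
  proof (cases "c = 0")
    case True
    have "(\<Sum>b\<in>K. formula r (int (card W')) (int (card R)) (c + b ^ (q+1) * a))
        = (\<Sum>b\<in>K - {0}. formula r (int (card W')) (int (card R)) (c + b ^ (q+1) * a))
          + (\<Sum>b\<in>{0}. formula r (int (card W')) (int (card R)) (c + b ^ (q+1) * a))"
      by (rule sum.subset_diff) auto
    also have "(\<Sum>b\<in>K - {0}. formula r (int (card W')) (int (card R)) (c + b ^ (q+1) * a))
        = (\<Sum>b\<in>K - {0}. fB)"
    proof (rule sum.cong)
      fix b assume b: "b \<in> K - {0}"
      then show "formula r (int (card W')) (int (card R)) (c + b ^ (q+1) * a) = fB"
        using dq[of b] a0 True by (simp add: formula_def fB_def)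
    qed simp
    also have "(\<Sum>b\<in>{0}. formula r (int (card W')) (int (card R)) (c + b ^ (q+1) * a)) = fA"
      using True q_ge2 fA' by (simp add: power_0_left)
    finally have "int q * int (NC W c) = (int q^2 - 1) * fB + fA"
      using main ncK q2 by (simp add: of_nat_diff)
    also have "\<dots> = fA + (int q^2 - 1) * fB" by simp
    also have "\<dots> = int q^2 * int (card W') + (- ((-1) ^ r)) * (int q - 1) * (int q * int q^r) * int (card R)"
      unfolding fA_def fB_def by (rule ar1)
    also have "\<dots> = formula (Suc r) (int (card W)) (int (card (rad W))) c"
      unfolding formula_def R_def cWi using True by simp
    finally show ?thesis .
  next
    case False
    note c0 = False
    show ?thesis
    proof (cases "c ^ q = lam * c")
      case True
      define t where "t = - c / a"
      have tq: "t ^ q = t" unfolding t_def using True aq lam0 a0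
        by (simp add: frob_neg power_divide)
      have t0: "t \<noteq> 0" unfolding t_def using c0 a0 by simp
      define Z where "Z = {b::'a. b ^ (q+1) = t}"
      have ZK: "Z \<subseteq> K" unfolding Z_def using norm_in_K[OF tq t0] by blast
      have cZ: "card Z = q + 1" unfolding Z_def by (rule norm_fiber[OF tq t0])
      have cKZ: "card (K - Z) = q^2 - (q + 1)" using card_Diff_subset[OF _ ZK] cZ card_K by simp
      have "q * 2 \<le> q * q" using q_ge2 by (intro mult_le_mono2)
      then have q3: "q^2 \<ge> q + 1" using q_ge2 unfolding power2_eq_square by linarith
      have "(\<Sum>b\<in>K. formula r (int (card W')) (int (card R)) (c + b ^ (q+1) * a))
          = (\<Sum>b\<in>K - Z. formula r (int (card W')) (int (card R)) (c + b ^ (q+1) * a))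
            + (\<Sum>b\<in>Z. formula r (int (card W')) (int (card R)) (c + b ^ (q+1) * a))"
        by (rule sum.subset_diff[OF ZK]) auto
      also have "(\<Sum>b\<in>K - Z. formula r (int (card W')) (int (card R)) (c + b ^ (q+1) * a))
          = (\<Sum>b\<in>K - Z. fB)"
      proof (rule sum.cong)
        fix b assume b: "b \<in> K - Z"
        have nz: "c + b ^ (q+1) * a \<noteq> 0"
        proof
          assume "c + b ^ (q+1) * a = 0"
          then have "b ^ (q+1) = t" unfolding t_def using a0
            by (simp add: field_simps eq_neg_iff_add_eq_0 add.commute)
          then show False using b unfolding Z_def by simp
        qed
        have "(c + b ^ (q+1) * a) ^ q = lam * (c + b ^ (q+1) * a)"
          using dq[of b] b True by (simp add: frob_add algebra_simps)
        then show "formula r (int (card W')) (int (card R)) (c + b ^ (q+1) * a) = fB"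
          using nz by (simp add: formula_def fB_def)
      qed simp
      also have "(\<Sum>b\<in>Z. formula r (int (card W')) (int (card R)) (c + b ^ (q+1) * a))
          = (\<Sum>b\<in>Z. fA)"
      proof (rule sum.cong)
        fix b assume "b \<in> Z"
        then have "c + b ^ (q+1) * a = 0" unfolding Z_def t_def using a0 by simp
        then show "formula r (int (card W')) (int (card R)) (c + b ^ (q+1) * a) = fA"
          using fA' by simp
      qed simp
      finally have "int q * int (NC W c) = (int q^2 - int q - 1) * fB + (int q + 1) * fA"
        using main cKZ cZ q3 by (simp add: of_nat_diff algebra_simps)
      also have "\<dots> = (int q + 1) * fA + (int q^2 - int q - 1) * fB" by simp
      also have "\<dots> = int q^2 * int (card W') - (- ((-1) ^ r)) * (int q * int q^r) * int (card R)"
        unfolding fA_def fB_def by (rule ar2)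
      also have "\<dots> = formula (Suc r) (int (card W)) (int (card (rad W))) c"
        unfolding formula_def R_def cWi using True c0 by simp
      finally show ?thesis .
    next
      case False
      have "formula r (int (card W')) (int (card R)) (c + b ^ (q+1) * a) = 0" if b: "b \<in> K" for b
      proof -
        have "c + b ^ (q+1) * a \<noteq> 0"
        proof
          assume "c + b ^ (q+1) * a = 0"
          then have "c = - (b ^ (q+1) * a)" by (simp add: eq_neg_iff_add_eq_0)
          then have "c ^ q = lam * c" using dq[OF b] by (simp add: frob_neg)
          then show False using False by simp
        qed
        moreover have "(c + b ^ (q+1) * a) ^ q \<noteq> lam * (c + b ^ (q+1) * a)"
        proof
          assume "(c + b ^ (q+1) * a) ^ q = lam * (c + b ^ (q+1) * a)"
          then have "c ^ q + (b ^ (q+1) * a) ^ q = lam * c + lam * (b ^ (q+1) * a)"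
            by (simp only: frob_add distrib_left)
          then have "c ^ q + lam * (b ^ (q+1) * a) = lam * c + lam * (b ^ (q+1) * a)"
            unfolding dq[OF b] .
          then have "c ^ q = lam * c" by simp
          then show False using False by simp
        qed
        ultimately show ?thesis by (simp add: formula_def)
      qed
      then have "int q * int (NC W c) = 0" using main by simp
      then show ?thesis using False c0 by (simp add: formula_def)
    qed
  qed
qed

end


theorem corollary4p2:
  fixes q n :: nat and a :: "nat \<Rightarrow> 'a::{field,finite}" and lam c :: 'a
  assumes "prime_power q" and "n > 0"
    and "card (UNIV::'a set) = q ^ (2*n)"
    and "lam \<in> subfield_q2 q"
    and "is_hermitian q (sigma_L q n a) lam"
    and "c \<in> subfield_q2 q"
  defines "r \<equiv> n - dim_q2 q (ker_L q n a)"
  defines "N \<equiv> card {u::'a. trace_rel q n (u * linpoly q n a (u ^ q)) + c = 0}"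
  shows "int N =
    (if c = 0 then int q ^ (2*n-1) + (-1) ^ r * (int q - 1) * int q ^ (2*n-r-1)
     else if c ^ (q - 1) = lam then int q ^ (2*n-1) + (-1) ^ (r + 1) * int q ^ (2*n-r-1)
     else 0)"
proof -
  interpret F: ffq q n "TYPE('a)" by unfold_locales (use assms in auto)
  interpret H: herm q n "TYPE('a)" "sigma_L q n a" lam
  proof unfold_locales
    fix u u' v :: 'a
    show "sigma_L q n a (u + u') v = sigma_L q n a u v + sigma_L q n a u' v"
      unfolding sigma_L_def by (simp add: distrib_right F.tr_add)
  next
    fix u v v' :: 'a
    show "sigma_L q n a u (v + v') = sigma_L q n a u v + sigma_L q n a u v'"
      unfolding sigma_L_def by (simp add: F.frob_add F.lin_add distrib_left F.tr_add)
  next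
    fix b u v :: 'a assume b: "b \<in> F.K"
    show "sigma_L q n a (b * u) v = b * sigma_L q n a u v"
      unfolding sigma_L_def using F.tr_scal[OF b] by (simp add: mult.assoc)
  next
    fix b u v :: 'a assume b: "b \<in> F.K"
    have "linpoly q n a ((b * v) ^ q) = b ^ q * linpoly q n a (v ^ q)"
      using F.lin_scal[OF F.K_frob[OF b]] by (simp add: power_mult_distrib)
    then have "u * linpoly q n a ((b * v) ^ q) = b ^ q * (u * linpoly q n a (v ^ q))"
      by (simp only: mult.left_commute)
    then show "sigma_L q n a u (b * v) = b ^ q * sigma_L q n a u v"
      unfolding sigma_L_def by (simp only: F.tr_scal[OF F.K_frob[OF b]])
  next
    fix u v :: 'a
    show "sigma_L q n a v u ^ q = lam * sigma_L q n a u v"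
      using assms(5) unfolding is_hermitian_def by blast
  next
    fix u v :: 'a
    show "sigma_L q n a u v \<in> F.K" unfolding sigma_L_def by (rule F.tr_K)
  qed
  have q2: "q \<ge> 2" by (rule F.q_ge2)
  have radU: "H.rad UNIV = (\<lambda>v. v ^ q) -` ker_L q n a"
  proof (intro equalityI subsetI)
    fix v assume "v \<in> H.rad UNIV"
    then have "\<forall>u. trace_rel q n (u * linpoly q n a (v ^ q)) = 0"
      unfolding H.rad_def sigma_L_def by simp
    then have "linpoly q n a (v ^ q) = 0" using F.tr_nondeg by blast
    then show "v \<in> (\<lambda>v. v ^ q) -` ker_L q n a" by (simp add: ker_L_def)
  next
    fix v assume "v \<in> (\<lambda>v. v ^ q) -` ker_L q n a"
    then have "linpoly q n a (v ^ q) = 0" by (simp add: ker_L_def)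
    then show "v \<in> H.rad UNIV" unfolding H.rad_def sigma_L_def trace_rel_def
      using q2 by (simp add: power_0_left)
  qed
  have surj: "surj (\<lambda>v::'a. v ^ q)" using F.frob_inj by (simp add: finite_UNIV_inj_surj)
  have cR: "card (H.rad UNIV) = card (ker_L q n a)"
    unfolding radU by (rule card_vimage_inj[OF F.frob_inj]) (use surj in auto)
  have subker: "F.subsp (ker_L q n a)" unfolding F.subsp_def ker_L_def
  proof (intro conjI ballI)
    show "(0::'a) \<in> {x. linpoly q n a x = 0}"
      unfolding linpoly_def using q2 by (simp add: power_0_left)
  qed (auto simp: F.lin_add F.lin_scal)
  obtain d where d: "card (ker_L q n a) = (q^2)^d" using F.subsp_card[OF subker] by blast
  have q2gt: "1 < q^2" using q2 by (intro one_less_power) auto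
  have dimd: "dim_q2 q (ker_L q n a) = d" unfolding dim_q2_def
  proof (rule the_equality)
    fix d' assume "card (ker_L q n a) = (q^2)^d'"
    then show "d' = d" using d q2gt power_inject_exp by metis
  qed (rule d)
  have "(q^2)^d \<le> (q^2)^n"
    using d card_mono[of UNIV "ker_L q n a"] assms(3) by (simp add: power_mult)
  then have dn: "d \<le> n" using q2gt power_le_imp_le_exp by blast
  have rd: "r = n - d" unfolding r_def dimd ..
  have cU: "card (UNIV::'a set) = q^(2*r) * card (H.rad UNIV)"
    unfolding cR d assms(3) rd using dn
    by (simp add: power_mult[symmetric] power_add[symmetric] algebra_simps)
  have subU: "F.subsp UNIV" unfolding F.subsp_def by simp
  have NN: "N = H.NC UNIV c" unfolding N_def H.NC_def sigma_L_def by simp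
  have main: "int q * int N = H.formula r (int (q^(2*n))) (int (q^(2*d))) c"
    using H.count_ind[OF subU cU, of c] unfolding NN cR d assms(3)
    by (simp add: power_mult)
  have e1: "int q ^ (2*n) = int q * int q ^ (2*n-1)"
    using assms(2) by (simp add: power_Suc[symmetric] del: power_Suc)
  have e2: "int q ^ r * int q ^ (2*d) = int q * int q ^ (2*n-r-1)"
  proof -
    have "r + 2*d = Suc (2*n-r-1)" using rd dn assms(2) by simp
    then show ?thesis by (simp add: power_add[symmetric] del: power_Suc) (simp add: power_Suc)
  qed
  have qpos: "int q \<noteq> 0" using q2 by simp
  show ?thesis
  proof (cases "c = 0")
    case True
    have m1: "int q * int N = int q ^ (2*n) + (-1)^r * (int q - 1) * (int q ^ r * int q ^ (2*d))"
      using main True unfolding H.formula_def by (simp add: mult.assoc)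
    then have "int q * int N = int q * (int q ^ (2*n-1) + (-1) ^ r * (int q - 1) * int q ^ (2*n-r-1))"
      unfolding e1 e2 by (simp add: algebra_simps)
    then show ?thesis using True qpos by simp
  next
    case False
    have iff: "c ^ (q - 1) = lam \<longleftrightarrow> c ^ q = lam * c"
    proof -
      obtain qq where qq: "q = Suc qq" using q2 by (cases q) auto
      show ?thesis unfolding qq using False by (auto simp: mult.commute)
    qed
    show ?thesis
    proof (cases "c ^ q = lam * c")
      case True
      have m1: "int q * int N = int q ^ (2*n) - (-1)^r * (int q ^ r * int q ^ (2*d))"
        using main True False unfolding H.formula_def by (simp add: mult.assoc)
      then have "int q * int N = int q * (int q ^ (2*n-1) + (-1) ^ (r+1) * int q ^ (2*n-r-1))"
        unfolding e1 e2 by (simp add: algebra_simps)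
      then show ?thesis using True False iff qpos by simp
    next
      case c2: False
      have "int q * int N = 0" using main c2 False unfolding H.formula_def by simp
      then show ?thesis using c2 False iff qpos by simp
    qed
  qed
qed

end
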